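(* Let $p$ be an odd prime and let $(P_n)_{n\ge0}$ be the Catalan-Larcombe-French numbers. Then $P_{p-1}\equiv(-1)^{\frac{p-1}{2}}\pmod{p}$ and $16P_{p-2}\equiv(-1)^{\frac{p-1}{2}}\pmod{p}$.
   Context: The Catalan-Larcombe-French numbers are defined by $P_0=1$, $P_1=8$ and, for $n\ge 2$, $n^2P_n-8(3n^2-3n+1)P_{n-1}+128(n-1)^2P_{n-2}=0$. Equivalently, $P_n=\frac{1}{n!}\sum_{r+s=n}\binom{2r}{r}\binom{2s}{s}\frac{(2r)!(2s)!}{r!s!}$ (sum over nonnegative integers $r,s$). *)

theory Defs
  imports "HOL-Number_Theory.Number_Theory"
begin

text \<open>Catalan-Larcombe-French numbers via the defining recurrence
  n^2 P n = 8(3n^2-3n+1) P(n-1) - 128 (n-1)^2 P(n-2); the division is exact.\<close>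
fun clf :: "nat \<Rightarrow> int" where
  "clf 0 = 1"
| "clf (Suc 0) = 8"
| "clf (Suc (Suc m)) =
     (let n = int m + 2 in
      (8 * (3*n^2 - 3*n + 1) * clf (Suc m) - 128 * (n - 1)^2 * clf m) div n^2)"

end

theory Submission
  imports Defs
begin


lemma choose_step: "(n choose Suc k) * Suc k = (n choose k) * (n - k)"
proof (cases n)
  case 0 then show ?thesis by simp
next
  case (Suc m)
  have "Suc m * (m choose k) = (Suc m choose Suc k) * Suc k" by (rule Suc_times_binomial_eq)
  moreover have "(Suc m - k) * (Suc m choose k) = Suc m * (m choose k)"
    using binomial_absorb_comp[of "Suc m" k] by simp
  ultimately show ?thesis using Suc by (simp add: mult.commute)
qed

lemma choose_step_real:
  "real (n choose Suc k) * (real k + 1) = real (n choose k) * (real n - real k)"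
proof (cases "k \<le> n")
  case True
  have "real ((n choose Suc k) * Suc k) = real ((n choose k) * (n - k))"
    using choose_step by metis
  then show ?thesis using True by (simp add: of_nat_diff algebra_simps)
next
  case False
  then show ?thesis by (simp add: binomial_eq_0)
qed

lemma fact_choose_real: assumes "k \<le> n"
  shows "fact k * fact (n-k) * real (n choose k) = (fact n :: real)"
proof -
  have h: "real (fact k * fact (n - k) * (n choose k)) = real (fact n)"
    using binomial_fact_lemma[OF assms] by (simp only:)
  thus ?thesis by (simp only: of_nat_mult of_nat_fact)
qed

lemma cb_step: "real ((2*Suc k) choose Suc k) * (real k + 1) = 2 * (2*real k + 1) * real ((2*k) choose k)"
proof -
  define A where "A = real ((2*Suc k) choose Suc k)"
  define B where "B = real ((2*k) choose k)"
  define f where "f = (fact k :: real)"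
  have a: "fact (Suc k) * fact (2 * Suc k - Suc k) * A = (fact (2 * Suc k)::real)"
    unfolding A_def by (rule fact_choose_real) simp
  have b: "fact k * fact (2*k-k) * B = (fact (2 * k)::real)"
    unfolding B_def by (rule fact_choose_real) simp
  have c: "(fact (2 * Suc k)::real) = (2*real k+2)*(2*real k+1) * fact (2*k)"
    by (simp add: algebra_simps)
  have d: "(fact (Suc k)::real) = (real k + 1) * f" by (simp add: f_def)
  have e: "2 * Suc k - Suc k = Suc k" "2*k-k = k" by simp_all
  have fpos: "f > 0" by (simp add: f_def)
  have a2: "fact (Suc k) * fact (Suc k) * A = (fact (2 * Suc k)::real)"
    using a by (simp only: e)
  have b2: "f * f * B = (fact (2 * k)::real)"
    using b by (simp only: e f_def)
  have "((real k + 1) * f) * ((real k + 1) * f) * A = (2*real k+2)*(2*real k+1) * (f * f * B)"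
    using a2 unfolding d c b2 .
  then have "(f * f * (real k + 1)) * (A * (real k + 1)) = (f * f * (real k + 1)) * (2 * (2*real k + 1) * B)"
    by (simp add: algebra_simps)
  moreover have "f * f * (real k + 1) \<noteq> 0" using fpos by simp
  ultimately have "A * (real k + 1) = 2 * (2*real k + 1) * B" by simp
  then show ?thesis by (simp add: A_def B_def)
qed


definition q :: "nat \<Rightarrow> real" where "q k = real ((2*k) choose k)^2 / 16^k"

lemma q_Suc: "q (Suc k) * (4*(real k+1)^2) = q k * (2*real k+1)^2"
proof -
  have h: "(real ((2*Suc k) choose Suc k) * (real k + 1))^2 = (2 * (2*real k + 1) * real ((2*k) choose k))^2"
    using cb_step by simp
  have "q (Suc k) * (4*(real k+1)^2) = (real ((2*Suc k) choose Suc k) * (real k + 1))^2 * 4 / 16^(Suc k)"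
    by (simp add: q_def power_mult_distrib)
  also have "\<dots> = (2 * (2*real k + 1) * real ((2*k) choose k))^2 * 4 / 16^(Suc k)" using h by simp
  also have "\<dots> = q k * (2*real k+1)^2"
  proof -
    have "(2 * (2*real k + 1) * real ((2*k) choose k))^2 = 4 * ((2*real k + 1)^2 * real ((2*k) choose k)^2)"
      by (simp add: power_mult_distrib power2_eq_square algebra_simps)
    then show ?thesis by (simp add: q_def)
  qed
  finally show ?thesis .
qed

definition Lt :: "nat \<Rightarrow> nat \<Rightarrow> real" where
  "Lt m k = (real m + 2)^2 * real ((m+2) choose (2*k)) * q k
     - (3*(real m+2)^2 - 3*(real m+2) + 1) * real ((m+1) choose (2*k)) * q k
     + 2*(real m+1)^2 * real (m choose (2*k)) * q k"

definition g :: "nat \<Rightarrow> nat \<Rightarrow> real" where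
  "g m j = - (real m + 1) * (2 * real j + 1) * real (m choose (2*j)) * q j"

lemma Lt0: "Lt m 0 = g m 0"
  by (simp add: Lt_def g_def q_def algebra_simps power2_eq_square)

lemma LtSuc: "Lt m (Suc j) = g m (Suc j) - g m j"
proof -
  define X where "X = real (m choose (2*j))"
  define U where "U = real (m choose Suc (2*j))"
  define V where "V = real (m choose Suc (Suc (2*j)))"
  define Q0 where "Q0 = q j"
  define Q1 where "Q1 = q (Suc j)"
  have e1: "real ((m+1) choose (2*Suc j)) = U + V"
    by (simp add: U_def V_def)
  have e2: "real ((m+2) choose (2*Suc j)) = X + 2*U + V"
    by (simp add: X_def U_def V_def numeral_2_eq_2)
  have r1: "U * (2*real j + 1) = X * (real m - 2*real j)"
    using choose_step_real[of m "2*j"] by (simp add: U_def X_def)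
  have r2: "V * (2*real j + 2) = U * (real m - 2*real j - 1)"
    using choose_step_real[of m "Suc (2*j)"] by (simp add: U_def V_def algebra_simps)
  have r3: "Q1 * (4*(real j+1)^2) = Q0 * (2*real j+1)^2"
    using q_Suc[of j] by (simp add: Q0_def Q1_def)
  have U': "U = X * (real m - 2*real j) / (2*real j + 1)"
    using r1 by (simp add: field_simps)
  have V': "V = U * (real m - 2*real j - 1) / (2*real j + 2)"
    using r2 by (simp add: field_simps)
  have Q1': "Q1 = Q0 * (2*real j+1)^2 / (4*(real j+1)^2)"
    using r3 by (simp add: field_simps)
  have "Lt m (Suc j) = (real m + 2)^2 * (X + 2*U + V) * Q1
     - (3*(real m+2)^2 - 3*(real m+2) + 1) * (U + V) * Q1
     + 2*(real m+1)^2 * V * Q1"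
    unfolding Lt_def e1 e2 by (simp add: V_def Q1_def)
  also have "\<dots> = - (real m + 1) * (2 * real (Suc j) + 1) * V * Q1 + (real m + 1) * (2 * real j + 1) * X * Q0"
  proof -
    define M where "M = real m"
    define a where "a = real j"
    define A where "A = 3*(M+2)^2 - 3*(M+2) + 1"
    define cV where "cV = (M+2)^2 - A + 2*(M+1)^2 + (M+1)*(2*a+3)"
    define E where "E = (M+2)^2 * X + (2*(M+2)^2 - A) * U + cV * V"
    have U1: "(2*a+1) * U = X * (M - 2*a)" using r1 by (simp add: M_def a_def mult.commute)
    have V1: "(2*a+1) * (2*a+2) * V = (M-2*a-1)*(M-2*a)*X"
    proof -
      have "(2*a+1) * (2*a+2) * V = (2*a+1) * (U * (M - 2*a - 1))" using r2 by (simp add: M_def a_def mult.commute)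
      also have "\<dots> = ((2*a+1) * U) * (M - 2*a - 1)" by simp
      also have "\<dots> = (M-2*a-1)*(M-2*a)*X" unfolding U1 by simp
      finally show ?thesis .
    qed
    have "(2*a+1) * (2*a+2) * E = (2*a+1)*(2*a+2)*(M+2)^2 * X + (2*a+2)*(2*(M+2)^2 - A) * ((2*a+1) * U) + cV * ((2*a+1) * (2*a+2) * V)"
      unfolding E_def by (simp add: algebra_simps)
    also have "\<dots> = (2*a+1)*(2*a+2)*(M+2)^2 * X + (2*a+2)*(2*(M+2)^2 - A) * (X * (M - 2*a)) + cV * ((M-2*a-1)*(M-2*a)*X)"
      unfolding U1 V1 ..
    also have "\<dots> = (2*a+2) * (4*(a+1)^2*(M+1)*X)"
      unfolding cV_def A_def by (simp add: power2_eq_square algebra_simps)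
    finally have "(2*a+1) * (2*a+2) * E = (2*a+2) * (4*(a+1)^2*(M+1)*X)" .
    then have E1: "(2*a+1) * E = 4*(a+1)^2*(M+1)*X"
      by (simp add: a_def)
    have r3': "Q1 * (4*(a+1)^2) = Q0 * (2*a+1)^2" using r3 by (simp add: a_def)
    have "(4*(a+1)^2) * (Q1 * E) = (Q1 * (4*(a+1)^2)) * E" by (simp add: algebra_simps)
    also have "\<dots> = (Q0 * (2*a+1)^2) * E" unfolding r3' ..
    also have "\<dots> = (2*a+1) * (Q0 * ((2*a+1) * E))" by (simp add: power2_eq_square algebra_simps)
    also have "\<dots> = (4*(a+1)^2) * ((M + 1) * (2 * a + 1) * X * Q0)"
      unfolding E1 by (simp add: algebra_simps)
    finally have "Q1 * E = (M + 1) * (2 * a + 1) * X * Q0"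
      by (simp add: a_def)
    then show ?thesis
      unfolding E_def cV_def A_def M_def a_def by (simp add: algebra_simps)
  qed
  also have "\<dots> = g m (Suc j) - g m j"
    by (simp add: g_def V_def X_def Q0_def Q1_def algebra_simps)
  finally show ?thesis .
qed


definition e :: "nat \<Rightarrow> real" where "e n = (\<Sum>k\<le>n. real (n choose (2*k)) * q k)"

lemma e_ext: assumes "n \<le> K" shows "e n = (\<Sum>k\<le>K. real (n choose (2*k)) * q k)"
  unfolding e_def
proof (rule sum.mono_neutral_left)
  show "\<forall>i\<in>{..K} - {..n}. real (n choose (2 * i)) * q i = 0"
    by (auto simp: binomial_eq_0)
qed (use assms in auto)

lemma tele: "(\<Sum>k\<le>K. Lt m k) = g m K"
  by (induction K) (simp_all add: Lt0 LtSuc)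

lemma e_rec: "(real m+2)^2 * e (m+2) - (3*(real m+2)^2 - 3*(real m+2) + 1) * e (m+1) + 2*(real m+1)^2 * e m = 0"
proof -
  have h1: "e (m+2) = (\<Sum>k\<le>m+2. real ((m+2) choose (2*k)) * q k)" by (rule e_ext) simp
  have h2: "e (m+1) = (\<Sum>k\<le>m+2. real ((m+1) choose (2*k)) * q k)" by (rule e_ext) simp
  have h3: "e m = (\<Sum>k\<le>m+2. real (m choose (2*k)) * q k)" by (rule e_ext) simp
  have "(real m+2)^2 * e (m+2) - (3*(real m+2)^2 - 3*(real m+2) + 1) * e (m+1) + 2*(real m+1)^2 * e m
      = (\<Sum>k\<le>m+2. (real m+2)^2 * (real ((m+2) choose (2*k)) * q k)
          - (3*(real m+2)^2 - 3*(real m+2) + 1) * (real ((m+1) choose (2*k)) * q k)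
          + 2*(real m+1)^2 * (real (m choose (2*k)) * q k))"
    unfolding h1 h2 h3 by (simp only: sum_distrib_left sum_subtractf sum.distrib)
  also have "\<dots> = (\<Sum>k\<le>m+2. Lt m k)"
    by (rule sum.cong[OF refl]) (simp add: Lt_def algebra_simps)
  also have "\<dots> = 0" by (simp only: tele) (simp add: g_def binomial_eq_0)
  finally show ?thesis .
qed

definition bb :: "nat \<Rightarrow> int" where
  "bb n = (\<Sum>k\<le>n. int (n choose (2*k)) * int ((2*k) choose k)^2 * 4^(n-2*k))"

lemma bb_e: "real_of_int (bb n) = 4^n * e n"
  unfolding bb_def e_def sum_distrib_left of_int_sum
proof (rule sum.cong[OF refl])
  fix k assume "k \<in> {..n}"
  show "real_of_int (int (n choose (2*k)) * int ((2*k) choose k)^2 * 4^(n-2*k)) = 4^n * (real (n choose (2*k)) * q k)"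
  proof (cases "2*k \<le> n")
    case True
    have a: "(16::real)^k = 4^(2*k)" by (simp add: power_mult)
    have "(4::real)^(n-2*k) * 4^(2*k) = 4^(n-2*k+2*k)" by (simp only: power_add)
    also have "n-2*k+2*k = n" using True by simp
    finally have "(4::real)^n = 4^(n-2*k) * 16^k" unfolding a by simp
    then show ?thesis by (simp add: q_def)
  next
    case False then show ?thesis by (simp add: binomial_eq_0)
  qed
qed

lemma clf_bb: "clf n = 2^n * bb n"
proof (induction n rule: less_induct)
  case (less n)
  show ?case
  proof (cases n)
    case 0 then show ?thesis by (simp add: bb_def)
  next
    case (Suc n1)
    show ?thesis
    proof (cases n1)
      case 0 then show ?thesis using Suc by (simp add: bb_def)
    next
      case (Suc m)
      have n: "n = Suc (Suc m)" using Suc \<open>n = Suc n1\<close> by simp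
      have IH1: "clf (Suc m) = 2^(Suc m) * bb (Suc m)" using less n by simp
      have IH2: "clf m = 2^m * bb m" using less n by simp
      define N where "N = int m + 2"
      have num: "8 * (3*N^2 - 3*N + 1) * clf (Suc m) - 128 * (N - 1)^2 * clf m = N^2 * (2^(Suc (Suc m)) * bb (Suc (Suc m)))"
      proof -
        have eight: "(8::real)^m = 2^m*4^m" by (simp flip: power_mult_distrib)
        have "real_of_int (8 * (3*N^2 - 3*N + 1) * clf (Suc m) - 128 * (N - 1)^2 * clf m)
            = 8^m * 64 * ((3*(real m+2)^2 - 3*(real m+2) + 1) * e (m+1) - 2*(real m+1)^2 * e m)"
          unfolding IH1 IH2 eight by (simp add: bb_e N_def power_mult_distrib algebra_simps)
        also have "\<dots> = 8^m * 64 * ((real m+2)^2 * e (m+2))" 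
        proof -
          have er: "(3*(real m+2)^2 - 3*(real m+2) + 1) * e (m+1) - 2*(real m+1)^2 * e m = (real m+2)^2 * e (m+2)"
            using e_rec[of m] by linarith
          show ?thesis by (simp only: er)
        qed
        also have "\<dots> = real_of_int (N^2 * (2^(Suc (Suc m)) * bb (Suc (Suc m))))"
          unfolding eight by (simp add: bb_e N_def power_mult_distrib algebra_simps)
        finally show ?thesis by (simp only: of_int_eq_iff)
      qed
      have "N^2 \<noteq> 0" by (simp add: N_def)
      have "clf (Suc (Suc m)) = (8 * (3*N^2 - 3*N + 1) * clf (Suc m) - 128 * (N - 1)^2 * clf m) div N^2"
        by (simp only: clf.simps Let_def N_def)
      also have "\<dots> = 2^(Suc (Suc m)) * bb (Suc (Suc m))"
        unfolding num using \<open>N^2 \<noteq> 0\<close> by (rule nonzero_mult_div_cancel_left)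
      finally show ?thesis unfolding n .
    qed
  qed
qed


lemma sum_odd_sq: "(\<Sum>k\<le>h. (2*k+1) * (h choose k)^2) = (h+1) * ((2*h) choose h)"
proof -
  define f where "f k = (2*k+1) * (h choose k)^2" for k
  have r: "(\<Sum>i<Suc h. f (Suc h - Suc i)) = (\<Sum>i<Suc h. f i)" by (rule sum.nat_diff_reindex)
  have "(\<Sum>i<Suc h. f (Suc h - Suc i)) = (\<Sum>i<Suc h. (2*(h-i)+1) * (h choose i)^2)"
  proof (rule sum.cong[OF refl])
    fix i assume "i \<in> {..<Suc h}"
    then have "i \<le> h" by simp
    then have "h choose (h - i) = h choose i" using binomial_symmetric[of i h] by simp
    then show "f (Suc h - Suc i) = (2*(h-i)+1) * (h choose i)^2" by (simp add: f_def)
  qed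
  then have S2: "(\<Sum>i\<le>h. f i) = (\<Sum>i\<le>h. (2*(h-i)+1) * (h choose i)^2)"
    using r by (simp add: lessThan_Suc_atMost)
  have "(\<Sum>i\<le>h. f i) + (\<Sum>i\<le>h. f i) = (\<Sum>i\<le>h. (2*h+2) * (h choose i)^2)"
    unfolding S2[symmetric, of] 
  proof -
    have "(\<Sum>i\<le>h. f i) + (\<Sum>i\<le>h. (2*(h-i)+1) * (h choose i)^2) = (\<Sum>i\<le>h. f i + (2*(h-i)+1) * (h choose i)^2)"
      by (simp add: sum.distrib)
    also have "\<dots> = (\<Sum>i\<le>h. (2*h+2) * (h choose i)^2)"
    proof (rule sum.cong[OF refl])
      fix i assume "i \<in> {..h}"
      then have "i \<le> h" by simp
      then have "2*i+1 + (2*(h-i)+1) = 2*h+2" by simp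
      then show "f i + (2*(h-i)+1) * (h choose i)^2 = (2*h+2) * (h choose i)^2"
        unfolding f_def by (metis add_mult_distrib)
    qed
    finally show "(\<Sum>i\<le>h. f i) + (\<Sum>i\<le>h. f i) = (\<Sum>i\<le>h. (2*h+2) * (h choose i)^2)"
      using S2 by simp
  qed
  also have "\<dots> = (2*h+2) * ((2*h) choose h)" by (simp only: sum_distrib_left[symmetric] choose_square_sum)
  finally show ?thesis unfolding f_def by simp
qed

context
  fixes p :: nat
  assumes pp: "prime p"
begin

lemma p_gt1: "p > 1" using pp prime_gt_1_nat by blast

lemma choose_pm1: "j \<le> p - 1 \<Longrightarrow> [int ((p-1) choose j) = (-1)^j] (mod int p)"
proof (induction j)
  case 0 then show ?case by simp
next
  case (Suc j)
  have pe: "p = Suc (p-1)" using p_gt1 by simp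
  have pas: "int (p choose Suc j) = int ((p-1) choose j) + int ((p-1) choose Suc j)"
    by (subst pe) simp
  have dv: "int p dvd int (p choose Suc j)"
    using dvd_choose_prime[of "Suc j" p] Suc.prems p_gt1 pp by simp
  have "[int ((p-1) choose Suc j) = int (p choose Suc j) - int ((p-1) choose j)] (mod int p)"
    using pas by simp
  also have "[int (p choose Suc j) - int ((p-1) choose j) = 0 - (-1)^j] (mod int p)"
    by (rule cong_diff) (use dv Suc in \<open>auto simp: cong_0_iff\<close>)
  finally show ?case by simp
qed

lemma choose_pm2: "j \<le> p - 2 \<Longrightarrow> [int ((p-2) choose j) = (-1)^j * (int j + 1)] (mod int p)"
proof (induction j)
  case 0 then show ?case by simp
next
  case (Suc j)
  have pe: "p - 1 = Suc (p-2)" using p_gt1 by simp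
  have pas: "int ((p-1) choose Suc j) = int ((p-2) choose j) + int ((p-2) choose Suc j)"
    by (subst pe) simp
  have "[int ((p-2) choose Suc j) = int ((p-1) choose Suc j) - int ((p-2) choose j)] (mod int p)"
    using pas by simp
  also have "[int ((p-1) choose Suc j) - int ((p-2) choose j) = (-1)^(Suc j) - (-1)^j * (int j + 1)] (mod int p)"
    by (rule cong_diff) (use Suc choose_pm1[of "Suc j"] in auto)
  also have "(-1)^(Suc j) - (-1)^j * (int j + 1) = (-1)^(Suc j) * (int (Suc j) + 1)"
    by (simp add: algebra_simps)
  finally show ?case .
qed

lemma cb_nat: "((2*Suc k) choose Suc k) * (k + 1) = 2 * (2*k + 1) * ((2*k) choose k)"
proof -
  have "real (((2*Suc k) choose Suc k) * (k + 1)) = real (2 * (2*k + 1) * ((2*k) choose k))"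
    using cb_step[of k] by (simp only: of_nat_mult of_nat_add of_nat_1 of_nat_numeral)
  then show ?thesis by (simp only: of_nat_eq_iff)
qed

lemma cb_mod:
  assumes "odd p" "k \<le> (p-1) div 2"
  shows "[int ((2*k) choose k) = (-4)^k * int (((p-1) div 2) choose k)] (mod int p)"
  using assms(2)
proof (induction k)
  case 0 then show ?case by simp
next
  case (Suc k)
  define h where "h = (p-1) div 2"
  have ph0: "p = 2 * h + 1" using assms(1) unfolding h_def by presburger
  have ph: "int p = 2 * int h + 1" using ph0 by simp
  have kh: "k < h" using Suc.prems h_def by simp
  have IH: "[int ((2*k) choose k) = (-4)^k * int (h choose k)] (mod int p)"
    using Suc h_def by simp
  have c1: "int ((2*Suc k) choose Suc k) * (int k + 1) = 2 * (2*int k + 1) * int ((2*k) choose k)"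
    using arg_cong[OF cb_nat[of k], of int] by (simp only: of_nat_mult of_nat_add of_nat_1 of_nat_numeral)
  have c2: "int (h choose Suc k) * (int k + 1) = int (h choose k) * (int h - int k)"
    using arg_cong[OF choose_step[of h k], of int] kh by (simp add: of_nat_diff algebra_simps)
  have "(int k + 1) * int ((2*Suc k) choose Suc k) = 2 * (2*int k + 1) * int ((2*k) choose k)"
    using c1 by (simp only: mult.commute)
  also have "[2 * (2*int k + 1) * int ((2*k) choose k) = 2 * (2*int k + 1) * ((-4)^k * int (h choose k))] (mod int p)"
    using IH by (rule cong_scalar_left)
  also have "[2 * (2*int k + 1) * ((-4)^k * int (h choose k)) = (-4) * (int h - int k) * ((-4)^k * int (h choose k))] (mod int p)"
  proof -
    have "[2 * (2*int k + 1) = (-4) * (int h - int k)] (mod int p)"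
    proof -
      have "2 * (2*int k + 1) - (-4) * (int h - int k) = int p * 2" using ph by (simp add: algebra_simps)
      then show ?thesis unfolding cong_iff_dvd_diff by simp
    qed
    then show ?thesis by (rule cong_scalar_right)
  qed
  also have "(-4) * (int h - int k) * ((-4)^k * int (h choose k)) = (-4)^(Suc k) * (int (h choose k) * (int h - int k))"
    by (simp add: algebra_simps)
  also have "\<dots> = (-4)^(Suc k) * (int (h choose Suc k) * (int k + 1))" unfolding c2 ..
  also have "\<dots> = (int k + 1) * ((-4)^(Suc k) * int (h choose Suc k))" by (simp only: mult_ac)
  finally have "[(int k + 1) * int ((2*Suc k) choose Suc k) = (int k + 1) * ((-4)^(Suc k) * int (h choose Suc k))] (mod int p)" .
  moreover have "coprime (int k + 1) (int p)"
  proof -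
    have "\<not> p dvd Suc k" using kh ph by (auto dest: dvd_imp_le)
    then have "coprime p (Suc k)" using pp prime_imp_coprime by blast
    then have "coprime (Suc k) p" by (simp add: coprime_commute)
    then show ?thesis using coprime_int_iff[of "Suc k" p] by (simp add: add.commute)
  qed
  ultimately show ?case unfolding h_def using cong_mult_lcancel by blast
qed

lemma fermat2:
  assumes "odd p" shows "[(2::int)^(p-1) = 1] (mod int p)"
proof -
  have "\<not> p dvd 2"
  proof
    assume "p dvd 2"
    then have "p \<le> 2" by (simp add: dvd_imp_le)
    then have "p = 2" using p_gt1 by simp
    then show False using assms by simp
  qed
  then have "[2^(p-1) = 1] (mod p)" using fermat_theorem[OF pp, of 2] by simp
  then have "[int (2^(p-1)) = int 1] (mod int p)" using cong_int_iff by blast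
  then show ?thesis by simp
qed

lemma fermat4:
  assumes "odd p" shows "[(4::int)^(p-1) = 1] (mod int p)"
proof -
  have "[((2::int)^(p-1))^2 = 1^2] (mod int p)" using fermat2[OF assms] by (rule cong_pow)
  moreover have "((2::int)^(p-1))^2 = 4^(p-1)"
  proof -
    have "((2::int)^(p-1))^2 = (2^2)^(p-1)" by (simp only: power_mult[symmetric] mult.commute)
    then show ?thesis by simp
  qed
  ultimately show ?thesis by simp
qed

lemma pow4: "2*k \<le> n \<Longrightarrow> ((-4::int)^k)^2 * 4^(n-2*k) = 4^n"
proof -
  assume a: "2*k \<le> n"
  have "((-4::int)^k)^2 = 4^(2*k)"
  proof -
    have "((-4::int)^k)^2 = ((-4)^2)^k" by (simp only: power_mult[symmetric] mult.commute)
    also have "\<dots> = (4^2)^k" by simp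
    also have "\<dots> = 4^(2*k)" by (simp only: power_mult)
    finally show ?thesis .
  qed
  moreover have "(4::int)^(2*k) * 4^(n-2*k) = 4^(2*k + (n-2*k))" by (simp only: power_add)
  moreover have "2*k + (n-2*k) = n" using a by simp
  ultimately show ?thesis by simp
qed

lemma part1:
  assumes "odd p"
  shows "[clf (p - 1) = (-1) ^ ((p - 1) div 2)] (mod int p)"
proof -
  define h where "h = (p-1) div 2"
  have ph0: "p = 2 * h + 1" using assms unfolding h_def by presburger
  have "clf (p-1) = 2^(p-1) * bb (p-1)" by (rule clf_bb)
  also have "[2^(p-1) * bb (p-1) = 1 * bb (p-1)] (mod int p)"
    using fermat2[OF assms] by (rule cong_scalar_right)
  also have "1 * bb (p-1) = (\<Sum>k\<le>h. int ((p-1) choose (2*k)) * int ((2*k) choose k)^2 * 4^(p-1-2*k))"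
  proof -
    have "1 * bb (p-1) = (\<Sum>k\<le>p-1. int ((p-1) choose (2*k)) * int ((2*k) choose k)^2 * 4^(p-1-2*k))"
      unfolding bb_def by (rule mult_1)
    also have "\<dots> = (\<Sum>k\<le>h. int ((p-1) choose (2*k)) * int ((2*k) choose k)^2 * 4^(p-1-2*k))"
    proof (rule sum.mono_neutral_right)
      show "finite {..p-1}" by simp
      show "{..h} \<subseteq> {..p-1}" using ph0 by auto
      show "\<forall>i\<in>{..p - 1} - {..h}. int (p - 1 choose (2 * i)) * int (2 * i choose i)^2 * 4 ^ (p - 1 - 2 * i) = 0"
      proof
        fix i assume "i \<in> {..p - 1} - {..h}"
        then have "p - 1 < 2*i" using ph0 by auto
        then have "(p - 1 choose (2 * i)) = 0" by (rule binomial_eq_0)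
        then show "int (p - 1 choose (2 * i)) * int (2 * i choose i)^2 * 4 ^ (p - 1 - 2 * i) = 0" by simp
      qed
    qed
    finally show ?thesis .
  qed
  also have "[(\<Sum>k\<le>h. int ((p-1) choose (2*k)) * int ((2*k) choose k)^2 * 4^(p-1-2*k))
      = (\<Sum>k\<le>h. int (h choose k)^2)] (mod int p)"
  proof (rule cong_sum)
    fix k assume "k \<in> {..h}"
    then have kh: "k \<le> h" by simp
    have "[int ((p-1) choose (2*k)) * int ((2*k) choose k)^2 * 4^(p-1-2*k)
        = (-1)^(2*k) * ((-4)^k * int (h choose k))^2 * 4^(p-1-2*k)] (mod int p)"
    proof -
      have c1: "[int ((p-1) choose (2*k)) = (-1)^(2*k)] (mod int p)"
        by (rule choose_pm1) (use kh ph0 in simp)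
      have c2: "[int ((2*k) choose k) = (-4)^k * int (h choose k)] (mod int p)"
        unfolding h_def by (rule cb_mod[OF assms]) (use kh h_def in simp)
      show ?thesis by (rule cong_mult[OF cong_mult[OF c1 cong_pow[OF c2]] cong_refl])
    qed
    also have "(-1)^(2*k) * ((-4)^k * int (h choose k))^2 * 4^(p-1-2*k) = int (h choose k)^2 * (((-4)^k)^2 * 4^(p-1-2*k))"
      by (simp add: power_mult_distrib)
    also have "\<dots> = int (h choose k)^2 * 4^(p-1)" using pow4[of k "p-1"] kh ph0 by simp
    also have "[int (h choose k)^2 * 4^(p-1) = int (h choose k)^2 * 1] (mod int p)"
      using fermat4[OF assms] by (rule cong_scalar_left)
    finally show "[int ((p-1) choose (2*k)) * int ((2*k) choose k)^2 * 4^(p-1-2*k) = int (h choose k)^2] (mod int p)" by simp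
  qed
  also have "(\<Sum>k\<le>h. int (h choose k)^2) = int ((p-1) choose h)"
  proof -
    have "(\<Sum>k\<le>h. int (h choose k)^2) = int (\<Sum>k\<le>h. (h choose k)^2)" by simp
    also have "\<dots> = int ((2*h) choose h)" by (simp only: choose_square_sum)
    finally show ?thesis using ph0 by simp
  qed
  also have "[int ((p-1) choose h) = (-1)^h] (mod int p)" by (rule choose_pm1) (use ph0 in simp)
  finally show ?thesis unfolding h_def .
qed

lemma part2:
  assumes "odd p"
  shows "[16 * clf (p - 2) = (-1) ^ ((p - 1) div 2)] (mod int p)"
proof -
  define h where "h = (p-1) div 2"
  have ph0: "p = 2 * h + 1" using assms unfolding h_def by presburger
  have h1: "h \<ge> 1" using ph0 p_gt1 by simp
  define T where "T k = int ((p-2) choose (2*k)) * int ((2*k) choose k)^2 * 4^(p-2-2*k)" for k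
  have "16 * clf (p-2) = 8 * 2^(p-1) * bb (p-2)"
  proof -
    have "(2::int)^(p-1) = 2 * 2^(p-2)"
    proof -
      have "p - 1 = Suc (p-2)" using p_gt1 ph0 by simp
      then show ?thesis by simp
    qed
    then show ?thesis by (simp add: clf_bb)
  qed
  also have "[8 * 2^(p-1) * bb (p-2) = 8 * 1 * bb (p-2)] (mod int p)"
    by (rule cong_scalar_right, rule cong_scalar_left, rule fermat2[OF assms])
  also have "8 * 1 * bb (p-2) = (\<Sum>k<h. 8 * T k)"
  proof -
    have "bb (p-2) = (\<Sum>k\<le>p-2. T k)" unfolding bb_def T_def ..
    also have "\<dots> = (\<Sum>k<h. T k)"
    proof (rule sum.mono_neutral_right)
      show "finite {..p-2}" by simp
      show "{..<h} \<subseteq> {..p-2}" using ph0 by auto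
      show "\<forall>i\<in>{..p-2} - {..<h}. T i = 0"
      proof
        fix i assume "i \<in> {..p-2} - {..<h}"
        then have "p - 2 < 2*i" using ph0 h1 by auto
        then have "(p - 2 choose (2 * i)) = 0" by (rule binomial_eq_0)
        then show "T i = 0" by (simp add: T_def)
      qed
    qed
    finally show ?thesis by (simp add: sum_distrib_left)
  qed
  also have "[(\<Sum>k<h. 8 * T k) = (\<Sum>k<h. 2 * (int (2*k+1) * int (h choose k)^2))] (mod int p)"
  proof (rule cong_sum)
    fix k assume "k \<in> {..<h}"
    then have kh: "k < h" by simp
    have c1: "[int ((p-2) choose (2*k)) = (-1)^(2*k) * (int (2*k) + 1)] (mod int p)"
      by (rule choose_pm2) (use kh ph0 in simp)
    have c2: "[int ((2*k) choose k) = (-4)^k * int (h choose k)] (mod int p)"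
      unfolding h_def by (rule cb_mod[OF assms]) (use kh h_def in simp)
    have "[8 * T k = 8 * ((-1)^(2*k) * (int (2*k) + 1) * ((-4)^k * int (h choose k))^2 * 4^(p-2-2*k))] (mod int p)"
      unfolding T_def
      by (rule cong_scalar_left, rule cong_mult[OF cong_mult[OF c1 cong_pow[OF c2]] cong_refl])
    also have "8 * ((-1)^(2*k) * (int (2*k) + 1) * ((-4)^k * int (h choose k))^2 * 4^(p-2-2*k))
        = 2 * (int (2*k+1) * int (h choose k)^2) * (4 * (((-4)^k)^2 * 4^(p-2-2*k)))"
      by (simp add: power_mult_distrib algebra_simps)
    also have "4 * (((-4::int)^k)^2 * 4^(p-2-2*k)) = 4^(p-1)"
    proof -
      have "((-4::int)^k)^2 * 4^(p-2-2*k) = 4^(p-2)" using pow4[of k "p-2"] kh ph0 by simp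
      moreover have "p - 1 = Suc (p-2)" using ph0 h1 by simp
      ultimately show ?thesis by simp
    qed
    also have "[2 * (int (2*k+1) * int (h choose k)^2) * 4^(p-1) = 2 * (int (2*k+1) * int (h choose k)^2) * 1] (mod int p)"
      using fermat4[OF assms] by (rule cong_scalar_left)
    finally show "[8 * T k = 2 * (int (2*k+1) * int (h choose k)^2)] (mod int p)" by simp
  qed
  also have "(\<Sum>k<h. 2 * (int (2*k+1) * int (h choose k)^2)) = int p * int ((2*h) choose h) + int ((2*h) choose h) - 2 * int p"
  proof -
    have S: "(\<Sum>k\<le>h. int (2*k+1) * int (h choose k)^2) = int (h+1) * int ((2*h) choose h)"
    proof -
      have "(\<Sum>k\<le>h. int (2*k+1) * int (h choose k)^2) = int (\<Sum>k\<le>h. (2*k+1) * (h choose k)^2)" by (simp only: of_nat_sum of_nat_mult of_nat_power)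
      also have "\<dots> = int ((h+1) * ((2*h) choose h))" by (simp only: sum_odd_sq)
      finally show ?thesis by (simp only: of_nat_mult)
    qed
    have "(\<Sum>k\<le>h. int (2*k+1) * int (h choose k)^2) = (\<Sum>k<h. int (2*k+1) * int (h choose k)^2) + int (2*h+1)"
      by (simp add: lessThan_Suc_atMost[symmetric])
    then have R: "(\<Sum>k<h. int (2*k+1) * int (h choose k)^2) = int (h+1) * int ((2*h) choose h) - int (2*h+1)"
      using S by simp
    have "(\<Sum>k<h. 2 * (int (2*k+1) * int (h choose k)^2)) = 2 * (\<Sum>k<h. int (2*k+1) * int (h choose k)^2)"
      by (simp only: sum_distrib_left)
    also have "\<dots> = 2 * (int (h+1) * int ((2*h) choose h) - int (2*h+1))" unfolding R ..
    also have "\<dots> = int p * int ((2*h) choose h) + int ((2*h) choose h) - 2 * int p"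
      using ph0 by (simp add: algebra_simps)
    finally show ?thesis .
  qed
  also have "[int p * int ((2*h) choose h) + int ((2*h) choose h) - 2 * int p = 0 * int ((2*h) choose h) + int ((2*h) choose h) - 2 * 0] (mod int p)"
    by (intro cong_diff cong_add cong_mult cong_refl) (simp_all add: cong_0_iff)
  also have "0 * int ((2*h) choose h) + int ((2*h) choose h) - 2 * 0 = int ((p-1) choose h)" using ph0 by simp
  also have "[int ((p-1) choose h) = (-1)^h] (mod int p)" by (rule choose_pm1) (use ph0 in simp)
  finally show ?thesis unfolding h_def .
qed

end

theorem lemma4:
  fixes p :: nat
  assumes "prime p" and "odd p"
  shows "[clf (p - 1) = (-1) ^ ((p - 1) div 2)] (mod int p)
       \<and> [16 * clf (p - 2) = (-1) ^ ((p - 1) div 2)] (mod int p)"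
  using part1[OF assms] part2[OF assms] by simp

end
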